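(* Let $H\Gamma=(C,\{\mathcal W,\mathcal X,\mathcal Y,\mathcal Z\},G_{zx},G_{wy})$ be a Lagrangian hypercube diagram and $L$ the embedded Legendrian torus obtained as the lift of the Lagrangian torus it determines, with $H_1(L)=\langle\tilde\gamma_{zx},\tilde\gamma_{wy}\rangle$. Then for $A=a[\tilde\gamma_{zx}]+b[\tilde\gamma_{wy}]\in H_1(L)$, $(a,b)\in\mathbb{Z}^2$, the Maslov index is $$\mu(A)=2a\,w(G_{zx})+2b\,w(G_{wy}),$$ where $w(G)=\frac14(\#\text{counterclockwise corners of }G-\#\text{clockwise corners of }G)$.
   Context: Grid conventions. In a plane with coordinates $(a,b)$ (below $(a,b)=(w,y)$ or $(a,b)=(z,x)$), an immersed grid diagram of size $n$ is an $n\times n$ grid of unit cells in $[0,n]^2$ with two kinds of markings at centers of cells, each row and each column containing exactly one marking of each kind; joining each marking of the first kind to the marking of the second kind in its row by an $a$-parallel segment, and each marking of the second kind to the marking of the first kind in its column by a $b$-parallel segment, gives an oriented connected closed piecewise-linear curve, with no crossing information recorded, viewed as an immersion $\gamma:\mathbb{R}/2\pi\mathbb{Z}\to\mathbb{R}^2$, $\theta\mapsto(a(\theta),b(\theta))$. It is a Lagrangian grid diagram if (1) $\int_0^{2\pi}b\,a'\,d\theta=0$ and (2) $\int_{\theta_0}^{\theta_1}b\,a'\,d\theta\neq0$ whenever $\theta_0\neq\theta_1$ and $\gamma(\theta_0)=\gamma(\theta_1)$. For a crossing $c=\gamma(\theta_0)=\gamma(\theta_1)$ put $|\Delta t(c)|=|\int_{\theta_0}^{\theta_1}b\,a'\,d\theta|$.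 The corners are the markings; a corner is counterclockwise (resp. clockwise) if the curve turns left (resp. right) there relative to the orientation of the $(a,b)$-plane. Hypercube diagrams. Let $C=[0,n]^4$ with coordinates $(w,x,y,z)$. A flat is a product in which two coordinates range over $[0,n]$ and the other two over unit intervals $[k,k+1]$, named by its two full coordinates; a cube is a product in which three coordinates range over $[0,n]$ and one over a unit interval. Markings are points with coordinates in $\mathbb{Z}+\frac12$ labelled $W,X,Y,Z$. Marking conditions: each cube contains exactly one marking of each label; each cube contains exactly two flats containing exactly three markings; in each such flat the three markings form a right angle with rays parallel to coordinate axes; its vertex is $W$ iff the flat is a $zw$-flat, $X$ iff a $wx$-flat, $Y$ iff an $xy$-flat, $Z$ iff a $yz$-flat. Join each $W$ to an $X$ by a $w$-parallel segment, each $X$ to a $Y$ by an $x$-parallel segment, each $Y$ to a $Z$ by a $y$-parallel segment and each $Z$ to a $W$ by a $z$-parallel segment; the projections of this oriented curve to the $(w,y)$- and $(z,x)$-planes are immersed grid diagrams $G_{wy}$ ($(a,b)=(w,y)$) and $G_{zx}$ ($(a,b)=(z,x)$). $H\Gamma$ is a Lagrangian hypercube diagram if the marking conditions hold, $G_{wy},G_{zx}$ are Lagrangian grid diagrams, and $|\Delta t(c)|\neq|\Delta t(c')|$ for all crossings $c$ of $G_{zx}$ and $c'$ of $G_{wy}$. Torus and lift. With $G_{zx}$ parametrized by $s\mapsto(z(s),x(s))$ and $G_{wy}$ by $u\mapsto(w(u),y(u))$ (corners slightly smoothed preserving (1),(2)), the torus is $i(s,u)=(w(u),x(s),y(u),z(s))$,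 Lagrangian for $\omega=dw\wedge dy+dz\wedge dx$, with loops $\gamma_{zx}=S^1\times\{1\}$, $\gamma_{wy}=\{1\}\times S^1$. In $\mathbb{R}^5$ with coordinates $(w,x,y,z,t)$ and contact form $dt-y\,dw-x\,dz$, the lift is $L=\{(i(p),t(p))\}$, $t(p)=t_0+\int_\gamma(y\,dw+x\,dz)$ along a path $\gamma$ from a base point to $p$; $\tilde\gamma_{zx},\tilde\gamma_{wy}$ are the lifts of the loops. The Maslov index $\mu:H_1(L)\to\mathbb{Z}$ assigns to a loop the Maslov index of the loop of (unoriented) Lagrangian tangent planes of $i$ along its projection, in the Lagrangian Grassmannian of $(\mathbb{R}^4,\omega)$. *)

theory Defs
  imports "HOL-Complex_Analysis.Complex_Analysis"
begin

text \<open>A cell of the hypercube [0,n]^4 is given by integer indices (w,x,y,z); the marking sits at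
  the centre (w+1/2, x+1/2, y+1/2, z+1/2).  Coordinate 0 = w, 1 = x, 2 = y, 3 = z.
  Labels: 0 = W, 1 = X, 2 = Y, 3 = Z.\<close>

type_synonym cell4 = "nat \<times> nat \<times> nat \<times> nat"

definition coord :: "cell4 \<Rightarrow> nat \<Rightarrow> nat" where
  "coord p j = (if j = 0 then fst p else if j = 1 then fst (snd p)
               else if j = 2 then fst (snd (snd p)) else snd (snd (snd p)))"

text \<open>The oriented closed curve of the hypercube diagram is given as a cyclic list
  W_0, X_0, Y_0, Z_0, W_1, X_1, ... of length 4n; the markings with label l are the entries at
  positions congruent to l mod 4.\<close>

definition hc_marks :: "cell4 list \<Rightarrow> nat \<Rightarrow> cell4 set" where
  "hc_marks cyc l = {cyc ! (4 * i + l) | i. i < length cyc div 4}"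

definition labelled_marks :: "cell4 list \<Rightarrow> (nat \<times> cell4) set" where
  "labelled_marks cyc = {(l, p). l < 4 \<and> p \<in> hc_marks cyc l}"

definition differ_in_one :: "cell4 \<Rightarrow> cell4 \<Rightarrow> nat \<Rightarrow> bool" where
  "differ_in_one v q i \<longleftrightarrow> coord v i \<noteq> coord q i \<and> (\<forall>j<4. j \<noteq> i \<longrightarrow> coord v j = coord q j)"

definition flat_marks :: "cell4 list \<Rightarrow> nat \<Rightarrow> nat \<Rightarrow> nat \<Rightarrow> nat \<Rightarrow> (nat \<times> cell4) set" where
  "flat_marks cyc j1 k1 j2 k2 =
     {(l, p) \<in> labelled_marks cyc. coord p j1 = k1 \<and> coord p j2 = k2}"

text \<open>Label of the vertex of the right angle in a flat with fixed coordinates j1 < j2: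
  zw-flat (x,y fixed) -> W, wx-flat (y,z fixed) -> X, xy-flat (w,z fixed) -> Y,
  yz-flat (w,x fixed) -> Z; other flats: none.\<close>
definition vertex_label :: "nat \<Rightarrow> nat \<Rightarrow> nat option" where
  "vertex_label j1 j2 =
     (if (j1, j2) = (1, 2) then Some 0
      else if (j1, j2) = (2, 3) then Some 1
      else if (j1, j2) = (0, 3) then Some 2
      else if (j1, j2) = (0, 1) then Some 3 else None)"

definition marking_conditions :: "nat \<Rightarrow> cell4 list \<Rightarrow> bool" where
  "marking_conditions n cyc \<longleftrightarrow>
     \<comment> \<open>each cube contains exactly one marking of each label\<close>
     (\<forall>j<4. \<forall>k<n. \<forall>l<4. card {p \<in> hc_marks cyc l. coord p j = k} = 1) \<and>
     \<comment> \<open>each cube contains exactly two flats containing exactly three markings\<close>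
     (\<forall>j<4. \<forall>k<n.
        card {(i, m). i < 4 \<and> i \<noteq> j \<and> m < n \<and> card (flat_marks cyc j k i m) = 3} = 2) \<and>
     \<comment> \<open>in each such flat the markings form a right angle with axis-parallel rays,
         vertex label determined by the type of the flat\<close>
     (\<forall>j1 j2 k1 k2. j1 < j2 \<and> j2 < 4 \<and> k1 < n \<and> k2 < n \<and>
        card (flat_marks cyc j1 k1 j2 k2) = 3 \<longrightarrow>
        (\<exists>lv v lq q lr r i i'. vertex_label j1 j2 = Some lv \<and>
           flat_marks cyc j1 k1 j2 k2 = {(lv, v), (lq, q), (lr, r)} \<and>
           differ_in_one v q i \<and> differ_in_one v r i' \<and> i \<noteq> i'))"

text \<open>Joining: W_i to X_i by a w-parallel segment, X_i to Y_i x-parallel, Y_i to Z_i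
  y-parallel, Z_i to W_(i+1) z-parallel.\<close>
definition joining_conditions :: "cell4 list \<Rightarrow> bool" where
  "joining_conditions cyc \<longleftrightarrow>
     (\<forall>k < length cyc. differ_in_one (cyc ! k) (cyc ! ((k + 1) mod length cyc)) (k mod 4))"

text \<open>An immersed grid diagram is given by the cyclic list of its corners (cell indices
  (a,b)); even positions are markings of the first kind, odd positions of the second kind;
  the edge from an even to the next odd corner is a-parallel, from an odd to the next even
  corner b-parallel.\<close>

definition immersed_grid :: "nat \<Rightarrow> (nat \<times> nat) list \<Rightarrow> bool" where
  "immersed_grid n vs \<longleftrightarrow> length vs = 2 * n \<and> n \<ge> 1 \<and>
     (\<forall>q\<in>set vs. fst q < n \<and> snd q < n) \<and>
     (\<forall>k < 2 * n. even k \<longrightarrow>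
         snd (vs ! k) = snd (vs ! ((k + 1) mod (2 * n))) \<and> fst (vs ! k) \<noteq> fst (vs ! ((k + 1) mod (2 * n)))) \<and>
     (\<forall>k < 2 * n. odd k \<longrightarrow>
         fst (vs ! k) = fst (vs ! ((k + 1) mod (2 * n))) \<and> snd (vs ! k) \<noteq> snd (vs ! ((k + 1) mod (2 * n)))) \<and>
     (\<forall>r < n. card {k. k < 2 * n \<and> even k \<and> snd (vs ! k) = r} = 1 \<and>
              card {k. k < 2 * n \<and> even k \<and> fst (vs ! k) = r} = 1 \<and>
              card {k. k < 2 * n \<and> odd k \<and> snd (vs ! k) = r} = 1 \<and>
              card {k. k < 2 * n \<and> odd k \<and> fst (vs ! k) = r} = 1)"

definition corner_pt :: "nat \<times> nat \<Rightarrow> real \<times> real" where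
  "corner_pt q = (real (fst q) + 1/2, real (snd q) + 1/2)"

definition pl_param :: "(nat \<times> nat) list \<Rightarrow> real \<Rightarrow> real \<times> real" where
  "pl_param vs \<theta> =
     (let m = length vs; \<tau> = \<theta> * real m / (2 * pi); k = \<lfloor>\<tau>\<rfloor>; f = \<tau> - real_of_int k;
          i = nat (k mod int m)
      in (1 - f) *\<^sub>R corner_pt (vs ! i) + f *\<^sub>R corner_pt (vs ! ((i + 1) mod m)))"

definition action :: "(real \<Rightarrow> real \<times> real) \<Rightarrow> real \<Rightarrow> real \<Rightarrow> real" where
  "action \<gamma> \<theta>0 \<theta>1 =
     integral {\<theta>0..\<theta>1} (\<lambda>\<theta>. snd (\<gamma> \<theta>) * fst (vector_derivative \<gamma> (at \<theta>)))"

definition crossings :: "(real \<Rightarrow> real \<times> real) \<Rightarrow> (real \<times> real) set" where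
  "crossings \<gamma> = {(\<theta>0, \<theta>1). 0 \<le> \<theta>0 \<and> \<theta>0 < \<theta>1 \<and> \<theta>1 < 2 * pi \<and> \<gamma> \<theta>0 = \<gamma> \<theta>1}"

definition lagrangian_curve :: "(real \<Rightarrow> real \<times> real) \<Rightarrow> bool" where
  "lagrangian_curve \<gamma> \<longleftrightarrow> action \<gamma> 0 (2 * pi) = 0 \<and>
     (\<forall>c\<in>crossings \<gamma>. action \<gamma> (fst c) (snd c) \<noteq> 0)"

definition lagrangian_grid :: "nat \<Rightarrow> (nat \<times> nat) list \<Rightarrow> bool" where
  "lagrangian_grid n vs \<longleftrightarrow> immersed_grid n vs \<and> lagrangian_curve (pl_param vs)"

definition dir_in :: "(nat \<times> nat) list \<Rightarrow> nat \<Rightarrow> real \<times> real" where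
  "dir_in vs k = corner_pt (vs ! k) - corner_pt (vs ! ((k + length vs - 1) mod length vs))"

definition dir_out :: "(nat \<times> nat) list \<Rightarrow> nat \<Rightarrow> real \<times> real" where
  "dir_out vs k = corner_pt (vs ! ((k + 1) mod length vs)) - corner_pt (vs ! k)"

definition turn :: "(nat \<times> nat) list \<Rightarrow> nat \<Rightarrow> real" where
  "turn vs k = fst (dir_in vs k) * snd (dir_out vs k) - snd (dir_in vs k) * fst (dir_out vs k)"

definition ccw_corners :: "(nat \<times> nat) list \<Rightarrow> nat" where
  "ccw_corners vs = card {k. k < length vs \<and> turn vs k > 0}"

definition cw_corners :: "(nat \<times> nat) list \<Rightarrow> nat" where
  "cw_corners vs = card {k. k < length vs \<and> turn vs k < 0}"

definition wG :: "(nat \<times> nat) list \<Rightarrow> real" where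
  "wG vs = (real (ccw_corners vs) - real (cw_corners vs)) / 4"

definition wy_proj :: "cell4 \<Rightarrow> nat \<times> nat" where "wy_proj p = (coord p 0, coord p 2)"
definition zx_proj :: "cell4 \<Rightarrow> nat \<times> nat" where "zx_proj p = (coord p 3, coord p 1)"

text \<open>G_wy: corners W_0, X_0, W_1, X_1, ... (W first kind).  G_zx: corners Y_0, W_1, Y_1, W_2, ...
  (Y = Z in the zx-projection are of the first kind, W = X of the second kind).\<close>
definition G_wy :: "cell4 list \<Rightarrow> (nat \<times> nat) list" where
  "G_wy cyc = concat (map (\<lambda>i. [wy_proj (cyc ! (4 * i)), wy_proj (cyc ! (4 * i + 1))])
                          [0..<length cyc div 4])"

definition G_zx :: "cell4 list \<Rightarrow> (nat \<times> nat) list" where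
  "G_zx cyc = concat (map (\<lambda>i. [zx_proj (cyc ! (4 * i + 2)),
                                 zx_proj (cyc ! ((4 * i + 4) mod length cyc))])
                          [0..<length cyc div 4])"

definition lagrangian_hypercube :: "nat \<Rightarrow> cell4 list \<Rightarrow> bool" where
  "lagrangian_hypercube n cyc \<longleftrightarrow>
     n \<ge> 1 \<and> length cyc = 4 * n \<and> (\<forall>p\<in>set cyc. \<forall>j<4. coord p j < n) \<and>
     marking_conditions n cyc \<and> joining_conditions cyc \<and>
     lagrangian_grid n (G_wy cyc) \<and> lagrangian_grid n (G_zx cyc) \<and>
     (\<forall>c\<in>crossings (pl_param (G_zx cyc)). \<forall>c'\<in>crossings (pl_param (G_wy cyc)).
        \<bar>action (pl_param (G_zx cyc)) (fst c) (snd c)\<bar> \<noteq>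
        \<bar>action (pl_param (G_wy cyc)) (fst c') (snd c')\<bar>)"

text \<open>A slight smoothing of the grid curve: a 2pi-periodic C^1 immersion that coincides with the
  piecewise-linear parametrization outside the delta-windows around the corner times
  2 pi k / m, inside the window around corner k its velocity is a nonnegative combination of
  the incoming and outgoing edge directions (the corner is rounded off), and which still
  satisfies conditions (1) and (2).\<close>
definition smoothing :: "(nat \<times> nat) list \<Rightarrow> (real \<Rightarrow> real \<times> real) \<Rightarrow> bool" where
  "smoothing vs g \<longleftrightarrow>
     (\<forall>\<theta>. g (\<theta> + 2 * pi) = g \<theta>) \<and>
     (\<forall>\<theta>. g differentiable (at \<theta>)) \<and>
     continuous_on UNIV (\<lambda>\<theta>. vector_derivative g (at \<theta>)) \<and>
     (\<forall>\<theta>. vector_derivative g (at \<theta>) \<noteq> 0) \<and>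
     (\<exists>\<delta>>0. \<delta> < pi / real (length vs) \<and>
        (\<forall>\<theta>. (\<forall>k::int. \<bar>\<theta> - 2 * pi * real_of_int k / real (length vs)\<bar> \<ge> \<delta>)
               \<longrightarrow> g \<theta> = pl_param vs \<theta>) \<and>
        (\<forall>k::int. \<forall>\<theta>. \<bar>\<theta> - 2 * pi * real_of_int k / real (length vs)\<bar> < \<delta> \<longrightarrow>
           (\<exists>\<alpha> \<beta>. \<alpha> \<ge> 0 \<and> \<beta> \<ge> 0 \<and>
              vector_derivative g (at \<theta>) =
                \<alpha> *\<^sub>R dir_in vs (nat (k mod int (length vs))) +
                \<beta> *\<^sub>R dir_out vs (nat (k mod int (length vs)))))) \<and>
     lagrangian_curve g"

text \<open>R^4 with coordinates (w,x,y,z) and omega = dw/\dy + dz/\dx.\<close>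
type_synonym r4 = "real \<times> real \<times> real \<times> real"

text \<open>i(s,u) = (w(u), x(s), y(u), z(s)), where g_zx(s) = (z(s), x(s)), g_wy(u) = (w(u), y(u)).\<close>
definition torus_imm :: "(real \<Rightarrow> real \<times> real) \<Rightarrow> (real \<Rightarrow> real \<times> real) \<Rightarrow> real \<Rightarrow> real \<Rightarrow> r4" where
  "torus_imm gzx gwy s u = (fst (gwy u), snd (gzx s), snd (gwy u), fst (gzx s))"

text \<open>Complex coordinates compatible with omega: zeta1 = w + i y, zeta2 = z + i x
  (Darboux pairs (q1,p1) = (w,y), (q2,p2) = (z,x)).\<close>
definition zeta1 :: "r4 \<Rightarrow> complex" where
  "zeta1 v = Complex (fst v) (fst (snd (snd v)))"
definition zeta2 :: "r4 \<Rightarrow> complex" where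
  "zeta2 v = Complex (snd (snd (snd v))) (fst (snd v))"

definition lag_det :: "r4 \<Rightarrow> r4 \<Rightarrow> complex" where
  "lag_det v1 v2 = zeta1 v1 * zeta2 v2 - zeta2 v1 * zeta1 v2"

text \<open>For a basis (v1,v2) of a Lagrangian plane Lambda, with Lambda = U R^2 for U unitary,
  this equals det(U)^2 (independent of the basis, i.e. a function of the unoriented plane).\<close>
definition lag_rho :: "r4 \<Rightarrow> r4 \<Rightarrow> complex" where
  "lag_rho v1 v2 = (lag_det v1 v2)\<^sup>2 / complex_of_real ((cmod (lag_det v1 v2))\<^sup>2)"

text \<open>Maslov index of a loop (parameter t in [0,1]) of Lagrangian planes spanned by the
  frames (f1 t, f2 t): the degree (winding number about 0) of t -> det(U(t))^2.\<close>
definition maslov_index :: "(real \<Rightarrow> r4) \<Rightarrow> (real \<Rightarrow> r4) \<Rightarrow> complex" where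
  "maslov_index f1 f2 = winding_number (\<lambda>t. lag_rho (f1 t) (f2 t)) 0"

definition torus_ds :: "(real \<Rightarrow> real \<times> real) \<Rightarrow> (real \<Rightarrow> real \<times> real) \<Rightarrow> real \<times> real \<Rightarrow> r4" where
  "torus_ds gzx gwy su = vector_derivative (\<lambda>s. torus_imm gzx gwy s (snd su)) (at (fst su))"
definition torus_du :: "(real \<Rightarrow> real \<times> real) \<Rightarrow> (real \<Rightarrow> real \<times> real) \<Rightarrow> real \<times> real \<Rightarrow> r4" where
  "torus_du gzx gwy su = vector_derivative (\<lambda>u. torus_imm gzx gwy (fst su) u) (at (snd su))"

end

theory Submission
  imports Defs
begin

definition cpx :: "real \<times> real \<Rightarrow> complex" where "cpx v = Complex (fst v) (snd v)"

lemma exp_rho: "(- exp w)\<^sup>2 / complex_of_real ((cmod (- exp w))\<^sup>2) = exp (2 * \<i> * complex_of_real (Im w))"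
proof -
  have "(- exp w)\<^sup>2 = exp (2*w)" by (simp add: exp_double[symmetric] power2_eq_square mult_exp_exp)
  moreover have "complex_of_real ((cmod (- exp w))\<^sup>2) = exp (complex_of_real (2 * Re w))"
    by (simp add: norm_exp_eq_Re exp_of_real[symmetric] power2_eq_square exp_add[symmetric] flip: exp_of_real)
  moreover have "exp (2*w) / exp (complex_of_real (2 * Re w)) = exp (2 * \<i> * complex_of_real (Im w))"
  proof -
    have "2*w - complex_of_real (2 * Re w) = 2 * \<i> * complex_of_real (Im w)"
      by (simp add: complex_eq_iff)
    then show ?thesis by (metis exp_diff)
  qed
  ultimately show ?thesis by simp
qed

lemma torus_ds_eq:
  assumes "gzx differentiable (at s)"
  shows "torus_ds gzx gwy (s, u) = (0, snd (vector_derivative gzx (at s)), 0, fst (vector_derivative gzx (at s)))"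
proof -
  let ?D = "vector_derivative gzx (at s)"
  have d: "(gzx has_vector_derivative ?D) (at s)" using assms vector_derivative_works by blast
  have d1: "((\<lambda>s. fst (gzx s)) has_vector_derivative fst ?D) (at s)"
    using has_derivative_fst[OF d[unfolded has_vector_derivative_def]]
    by (simp add: has_vector_derivative_def)
  have d2: "((\<lambda>s. snd (gzx s)) has_vector_derivative snd ?D) (at s)"
    using has_derivative_snd[OF d[unfolded has_vector_derivative_def]]
    by (simp add: has_vector_derivative_def)
  have "((\<lambda>s. torus_imm gzx gwy s u) has_vector_derivative (0, snd ?D, 0, fst ?D)) (at s)"
    unfolding torus_imm_def
    by (intro has_vector_derivative_Pair d1 d2 has_vector_derivative_const)
  then show ?thesis unfolding torus_ds_def by (simp add: vector_derivative_at)
qed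

lemma torus_du_eq:
  assumes "gwy differentiable (at u)"
  shows "torus_du gzx gwy (s, u) = (fst (vector_derivative gwy (at u)), 0, snd (vector_derivative gwy (at u)), 0)"
proof -
  let ?D = "vector_derivative gwy (at u)"
  have d: "(gwy has_vector_derivative ?D) (at u)" using assms vector_derivative_works by blast
  have d1: "((\<lambda>s. fst (gwy s)) has_vector_derivative fst ?D) (at u)"
    using has_derivative_fst[OF d[unfolded has_vector_derivative_def]]
    by (simp add: has_vector_derivative_def)
  have d2: "((\<lambda>s. snd (gwy s)) has_vector_derivative snd ?D) (at u)"
    using has_derivative_snd[OF d[unfolded has_vector_derivative_def]]
    by (simp add: has_vector_derivative_def)
  have "((\<lambda>u. torus_imm gzx gwy s u) has_vector_derivative (fst ?D, 0, snd ?D, 0)) (at u)"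
    unfolding torus_imm_def
    by (intro has_vector_derivative_Pair d1 d2 has_vector_derivative_const)
  then show ?thesis unfolding torus_du_def by (simp add: vector_derivative_at)
qed

lemma lag_det_eq: "lag_det (0, x1, 0, z1) (w2, 0, y2, 0) = - (cpx (z1, x1) * cpx (w2, y2))"
  by (simp add: lag_det_def zeta1_def zeta2_def cpx_def complex_eq_iff)


lemma grid_len: "immersed_grid n vs \<Longrightarrow> length vs = 2*n \<and> n \<ge> 1"
  by (simp add: immersed_grid_def)

lemma corner_pt_diff: "corner_pt q - corner_pt q' = (real (fst q) - real (fst q'), real (snd q) - real (snd q'))"
  by (simp add: corner_pt_def)

lemma dir_out_shape:
  assumes "immersed_grid n vs" "i < length vs"
  shows "(even i \<longrightarrow> snd (dir_out vs i) = 0 \<and> fst (dir_out vs i) \<noteq> 0) \<and>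
         (odd i \<longrightarrow> fst (dir_out vs i) = 0 \<and> snd (dir_out vs i) \<noteq> 0)"
proof -
  have L: "length vs = 2*n" using assms(1) by (simp add: immersed_grid_def)
  have e: "even i \<longrightarrow> snd (vs ! i) = snd (vs ! ((i + 1) mod (2 * n))) \<and> fst (vs ! i) \<noteq> fst (vs ! ((i + 1) mod (2 * n)))"
    and o: "odd i \<longrightarrow> fst (vs ! i) = fst (vs ! ((i + 1) mod (2 * n))) \<and> snd (vs ! i) \<noteq> snd (vs ! ((i + 1) mod (2 * n)))"
    using assms unfolding immersed_grid_def by auto
  show ?thesis using e o unfolding dir_out_def L corner_pt_diff by auto
qed

lemma dir_in_eq:
  assumes "0 < length vs" "j < length vs"
  shows "dir_in vs j = dir_out vs ((j + length vs - 1) mod length vs)"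
proof -
  let ?m = "length vs"
  have "((j + ?m - 1) mod ?m + 1) mod ?m = (j + ?m - 1 + 1) mod ?m"
    by (simp add: mod_Suc_eq)
  also have "\<dots> = j" using assms by simp
  finally show ?thesis unfolding dir_in_def dir_out_def by simp
qed

lemma prev_parity:
  fixes m j :: nat
  assumes "even m" "0 < m" "j < m"
  shows "(j + m - 1) mod m < m \<and> (even ((j + m - 1) mod m) \<longleftrightarrow> odd j)"
proof (cases j)
  case 0
  then show ?thesis using assms by auto
next
  case (Suc j')
  then have "(j + m - 1) mod m = j'" using assms
    by (simp add: Suc_lessD)
  then show ?thesis using assms Suc by auto
qed

lemma corner_geom:
  assumes "immersed_grid n vs" "j < length vs"
  shows "turn vs j \<noteq> 0"
    and "fst (dir_in vs j) * fst (dir_out vs j) + snd (dir_in vs j) * snd (dir_out vs j) = 0"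
    and "dir_in vs j \<noteq> 0" "dir_out vs j \<noteq> 0"
proof -
  let ?m = "length vs"
  have L: "?m = 2*n" "n \<ge> 1" using grid_len[OF assms(1)] by auto
  let ?i = "(j + ?m - 1) mod ?m"
  have pp: "?i < ?m \<and> (even ?i \<longleftrightarrow> odd j)" using prev_parity[of ?m j] L assms by auto
  have din: "dir_in vs j = dir_out vs ?i" using dir_in_eq[of vs j] L assms by auto
  have s1: "(even j \<longrightarrow> snd (dir_out vs j) = 0 \<and> fst (dir_out vs j) \<noteq> 0) \<and>
         (odd j \<longrightarrow> fst (dir_out vs j) = 0 \<and> snd (dir_out vs j) \<noteq> 0)"
    using dir_out_shape[OF assms] .
  have s2: "(even ?i \<longrightarrow> snd (dir_out vs ?i) = 0 \<and> fst (dir_out vs ?i) \<noteq> 0) \<and>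
         (odd ?i \<longrightarrow> fst (dir_out vs ?i) = 0 \<and> snd (dir_out vs ?i) \<noteq> 0)"
    using dir_out_shape[OF assms(1)] pp by blast
  show "turn vs j \<noteq> 0" unfolding turn_def din using s1 s2 pp by (cases "even j") auto
  show "fst (dir_in vs j) * fst (dir_out vs j) + snd (dir_in vs j) * snd (dir_out vs j) = 0"
    unfolding din using s1 s2 pp by (cases "even j") auto
  show "dir_in vs j \<noteq> 0" unfolding din using s2 by (cases "even ?i") (auto simp: prod_eq_iff)
  show "dir_out vs j \<noteq> 0" using s1 by (cases "even j") (auto simp: prod_eq_iff)
qed


lemma pl_param_local:
  fixes k :: int
  assumes m: "0 < length vs"
    and y: "2*pi*real_of_int k / real (length vs) < y" "y < 2*pi*real_of_int (k+1) / real (length vs)"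
  shows "pl_param vs y = (1 - (y * real (length vs) / (2*pi) - real_of_int k)) *\<^sub>R corner_pt (vs ! nat (k mod int (length vs)))
        + (y * real (length vs) / (2*pi) - real_of_int k) *\<^sub>R corner_pt (vs ! ((nat (k mod int (length vs)) + 1) mod length vs))"
proof -
  let ?m = "real (length vs)"
  have mp: "?m > 0" using m by simp
  have "real_of_int k < y * ?m / (2*pi)"
    using y(1) mp pi_gt_zero by (simp add: field_simps)
  moreover have "y * ?m / (2*pi) < real_of_int k + 1"
    using y(2) mp pi_gt_zero by (simp add: field_simps)
  ultimately have "\<lfloor>y * ?m / (2*pi)\<rfloor> = k" by linarith
  then show ?thesis unfolding pl_param_def Let_def by simp
qed

lemma pl_deriv:
  fixes k :: int
  assumes m: "0 < length vs"
    and y: "2*pi*real_of_int k / real (length vs) < y" "y < 2*pi*real_of_int (k+1) / real (length vs)"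
  shows "(pl_param vs has_vector_derivative (real (length vs) / (2*pi)) *\<^sub>R dir_out vs (nat (k mod int (length vs)))) (at y)"
proof -
  let ?m = "real (length vs)"
  let ?i = "nat (k mod int (length vs))"
  let ?P = "corner_pt (vs ! ?i)" and ?Q = "corner_pt (vs ! ((?i + 1) mod length vs))"
  define L where "L y = (1 - (y * ?m / (2*pi) - real_of_int k)) *\<^sub>R ?P + (y * ?m / (2*pi) - real_of_int k) *\<^sub>R ?Q" for y
  have "(L has_vector_derivative ((- (?m / (2*pi))) *\<^sub>R ?P + (?m / (2*pi)) *\<^sub>R ?Q)) (at y)"
    unfolding L_def
    by (rule derivative_eq_intros refl | simp)+
  moreover have "(- (?m / (2*pi))) *\<^sub>R ?P + (?m / (2*pi)) *\<^sub>R ?Q = (?m / (2*pi)) *\<^sub>R dir_out vs ?i"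
    unfolding dir_out_def by (simp add: algebra_simps)
  ultimately have dL: "(L has_vector_derivative (?m / (2*pi)) *\<^sub>R dir_out vs ?i) (at y)" by simp
  show ?thesis
  proof (rule has_vector_derivative_transform_within_open[OF dL, of "{2*pi*real_of_int k / ?m <..< 2*pi*real_of_int (k+1) / ?m}"])
    show "y \<in> {2*pi*real_of_int k / ?m <..< 2*pi*real_of_int (k+1) / ?m}" using y by simp
    fix z assume "z \<in> {2*pi*real_of_int k / ?m <..< 2*pi*real_of_int (k+1) / ?m}"
    then show "L z = pl_param vs z" unfolding L_def using pl_param_local[OF m, of k z] by simp
  qed simp
qed


definition tk :: "(nat \<times> nat) list \<Rightarrow> int \<Rightarrow> real" where
  "tk vs k = 2*pi*real_of_int k / real (length vs)"

lemma tk_mono: "0 < length vs \<Longrightarrow> k \<le> k' \<Longrightarrow> tk vs k \<le> tk vs k'"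
  unfolding tk_def by (intro divide_right_mono mult_left_mono) auto

lemma tk_step: "0 < length vs \<Longrightarrow> tk vs (k+1) = tk vs k + 2*pi / real (length vs)"
  unfolding tk_def by (simp add: field_simps)

lemma smoothing_props:
  assumes sm: "smoothing vs g" and m: "0 < length vs"
  obtains \<delta> where "0 < \<delta>" "\<delta> < pi / real (length vs)"
    "\<And>k \<theta>. tk vs k + \<delta> < \<theta> \<Longrightarrow> \<theta> < tk vs (k+1) - \<delta> \<Longrightarrow>
        vector_derivative g (at \<theta>) = (real (length vs) / (2*pi)) *\<^sub>R dir_out vs (nat (k mod int (length vs)))"
    "\<And>k \<theta>. \<bar>\<theta> - tk vs k\<bar> < \<delta> \<Longrightarrow> (\<exists>\<alpha> \<beta>. \<alpha> \<ge> 0 \<and> \<beta> \<ge> 0 \<and>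
              vector_derivative g (at \<theta>) =
                \<alpha> *\<^sub>R dir_in vs (nat (k mod int (length vs))) +
                \<beta> *\<^sub>R dir_out vs (nat (k mod int (length vs))))"
proof -
  obtain \<delta> where d0: "\<delta> > 0" and d1: "\<delta> < pi / real (length vs)"
    and out: "\<And>\<theta>. (\<forall>k::int. \<bar>\<theta> - 2 * pi * real_of_int k / real (length vs)\<bar> \<ge> \<delta>)
               \<Longrightarrow> g \<theta> = pl_param vs \<theta>"
    and win: "\<And>k \<theta>. \<bar>\<theta> - 2 * pi * real_of_int k / real (length vs)\<bar> < \<delta> \<Longrightarrow>
           (\<exists>\<alpha> \<beta>. \<alpha> \<ge> 0 \<and> \<beta> \<ge> 0 \<and>
              vector_derivative g (at \<theta>) =
                \<alpha> *\<^sub>R dir_in vs (nat (k mod int (length vs))) +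
                \<beta> *\<^sub>R dir_out vs (nat (k mod int (length vs))))"
    using sm unfolding smoothing_def by metis
  show ?thesis
  proof (rule that[OF d0 d1])
    fix k \<theta> assume a1: "tk vs k + \<delta> < \<theta>" and a2: "\<theta> < tk vs (k+1) - \<delta>"
    let ?O = "{tk vs k + \<delta> <..< tk vs (k+1) - \<delta>}"
    have eq: "pl_param vs y = g y" if "y \<in> ?O" for y
    proof -
      have "\<bar>y - 2 * pi * real_of_int k' / real (length vs)\<bar> \<ge> \<delta>" for k'
      proof (cases "k' \<le> k")
        case True
        then have "tk vs k' \<le> tk vs k" using tk_mono[OF m] by blast
        then show ?thesis using that unfolding tk_def by auto
      next
        case False
        then have "tk vs (k+1) \<le> tk vs k'" using tk_mono[OF m] by simp
        then show ?thesis using that unfolding tk_def by auto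
      qed
      then show ?thesis using out by metis
    qed
    have "(pl_param vs has_vector_derivative (real (length vs) / (2*pi)) *\<^sub>R dir_out vs (nat (k mod int (length vs)))) (at \<theta>)"
      using pl_deriv[OF m, of k \<theta>] a1 a2 d0 unfolding tk_def by auto
    then have "(g has_vector_derivative (real (length vs) / (2*pi)) *\<^sub>R dir_out vs (nat (k mod int (length vs)))) (at \<theta>)"
      by (rule has_vector_derivative_transform_within_open[of _ _ _ ?O]) (use a1 a2 eq in auto)
    then show "vector_derivative g (at \<theta>) = (real (length vs) / (2*pi)) *\<^sub>R dir_out vs (nat (k mod int (length vs)))"
      by (rule vector_derivative_at)
  next
    fix k \<theta> assume "\<bar>\<theta> - tk vs k\<bar> < \<delta>"
    then show "\<exists>\<alpha> \<beta>. \<alpha> \<ge> 0 \<and> \<beta> \<ge> 0 \<and>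
              vector_derivative g (at \<theta>) =
                \<alpha> *\<^sub>R dir_in vs (nat (k mod int (length vs))) +
                \<beta> *\<^sub>R dir_out vs (nat (k mod int (length vs)))"
      using win unfolding tk_def by blast
  qed
qed


lemma idx_prev:
  fixes k :: int
  assumes "0 < length vs"
  shows "dir_in vs (nat (k mod int (length vs))) = dir_out vs (nat ((k - 1) mod int (length vs)))"
proof -
  let ?m = "length vs"
  let ?j = "nat (k mod int ?m)"
  have j: "?j < ?m" using assms by (simp add: nat_less_iff)
  have i1: "int (?j + ?m - 1) = int ?j + int ?m - 1" proof -
    have "1 \<le> ?j + ?m" using assms by linarith
    then show ?thesis by (simp add: of_nat_diff)
  qed
  have "int ((?j + ?m - 1) mod ?m) = (int ?j + int ?m - 1) mod int ?m"
    by (simp only: zmod_int i1)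
  also have "\<dots> = (k mod int ?m + int ?m - 1) mod int ?m" using assms by simp
  also have "\<dots> = ((k mod int ?m - 1) + int ?m) mod int ?m" by (simp add: algebra_simps)
  also have "\<dots> = (k mod int ?m - 1) mod int ?m" by (rule mod_add_self2)
  also have "\<dots> = (k - 1) mod int ?m" by (rule mod_diff_left_eq)
  finally have "(?j + ?m - 1) mod ?m = nat ((k - 1) mod int ?m)" by linarith
  then show ?thesis using dir_in_eq[OF assms j] by simp
qed

lemma angle_pos:
  fixes \<psi> :: "real \<Rightarrow> real"
  assumes ab: "a \<le> b" and c: "continuous_on {a..b} \<psi>" and a0: "\<psi> a = 0"
    and q: "\<And>\<theta>. \<theta> \<in> {a..b} \<Longrightarrow> cos (\<psi> \<theta>) \<ge> 0 \<and> sin (\<psi> \<theta>) \<ge> 0"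
    and b: "cos (\<psi> b) = 0"
  shows "\<psi> b = pi/2"
proof -
  have rng: "0 \<le> \<psi> \<theta> \<and> \<psi> \<theta> \<le> pi/2" if th: "\<theta> \<in> {a..b}" for \<theta>
  proof (rule ccontr)
    assume "\<not> (0 \<le> \<psi> \<theta> \<and> \<psi> \<theta> \<le> pi/2)"
    then consider "\<psi> \<theta> < 0" | "\<psi> \<theta> > pi/2" by linarith
    then show False
    proof cases
      case 1
      define v where "v = max (\<psi> \<theta>) (-pi/2) / 2"
      have v: "\<psi> \<theta> \<le> v" "v \<le> \<psi> a" "- pi/2 < v" "v < 0" using 1 a0 pi_gt_zero by (auto simp: v_def max_def)
      have "continuous_on {a..\<theta>} \<psi>" using c th by (auto intro: continuous_on_subset)
      then obtain x where x: "a \<le> x" "x \<le> \<theta>" "\<psi> x = v" using IVT2'[of \<psi> \<theta> v a] v th by auto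
      have "sin (- v) > 0" using v by (intro sin_gt_zero) auto
      then have "sin v < 0" by simp
      then show False using q[of x] x th by auto
    next
      case 2
      define v where "v = (pi/2 + min (\<psi> \<theta>) pi) / 2"
      have v: "\<psi> a \<le> v" "v \<le> \<psi> \<theta>" "pi/2 < v" "v < pi" using 2 a0 pi_gt_zero by (auto simp: v_def min_def)
      have "continuous_on {a..\<theta>} \<psi>" using c th by (auto intro: continuous_on_subset)
      then obtain x where x: "a \<le> x" "x \<le> \<theta>" "\<psi> x = v" using IVT'[of \<psi> a v \<theta>] v th by auto
      have "cos (pi - v) > 0" using v by (intro cos_gt_zero_pi) auto
      then have "cos v < 0" by simp
      then show False using q[of x] x th by auto
    qed
  qed
  have r: "0 \<le> \<psi> b" "\<psi> b \<le> pi/2" using rng[of b] ab by auto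
  show ?thesis
  proof (rule ccontr)
    assume "\<psi> b \<noteq> pi/2"
    then have "cos (\<psi> b) > 0" using r by (intro cos_gt_zero_pi) auto
    then show False using b by simp
  qed
qed


lemma cpx_alt: "cpx v = complex_of_real (fst v) + \<i> * complex_of_real (snd v)"
  by (simp add: cpx_def complex_eq_iff)
lemma cpx_add: "cpx (u + v) = cpx u + cpx v" by (simp add: cpx_def complex_eq_iff)
lemma cpx_scale: "cpx (r *\<^sub>R v) = complex_of_real r * cpx v" by (simp add: cpx_def complex_eq_iff)
lemma Re_cpx_cnj: "Re (cpx u * cnj (cpx v)) = fst u * fst v + snd u * snd v" by (simp add: cpx_def)
lemma Im_cpx_cnj: "Im (cpx u * cnj (cpx v)) = snd u * fst v - fst u * snd v" by (simp add: cpx_def)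
lemma continuous_on_cpx: "continuous_on S f \<Longrightarrow> continuous_on S (\<lambda>x. cpx (f x))"
  unfolding cpx_alt by (intro continuous_intros)

lemma corner_step:
  fixes k :: int
  assumes grid: "immersed_grid n vs" and sm: "smoothing vs g"
    and Fc: "continuous_on UNIV F" and FG: "\<And>\<theta>. cpx (vector_derivative g (at \<theta>)) = exp (F \<theta>)"
  shows "Im (F (tk vs k + pi / real (length vs))) - Im (F (tk vs (k-1) + pi / real (length vs)))
       = sgn (turn vs (nat (k mod int (length vs)))) * (pi/2)"
proof -
  let ?m = "length vs"
  have m: "0 < ?m" using grid_len[OF grid] by auto
  obtain \<delta> where d0: "0 < \<delta>" and d1: "\<delta> < pi / real ?m"
    and edge: "\<And>k \<theta>. tk vs k + \<delta> < \<theta> \<Longrightarrow> \<theta> < tk vs (k+1) - \<delta> \<Longrightarrow>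
        vector_derivative g (at \<theta>) = (real ?m / (2*pi)) *\<^sub>R dir_out vs (nat (k mod int ?m))"
    and win: "\<And>k \<theta>. \<bar>\<theta> - tk vs k\<bar> < \<delta> \<Longrightarrow> (\<exists>\<alpha> \<beta>. \<alpha> \<ge> 0 \<and> \<beta> \<ge> 0 \<and>
              vector_derivative g (at \<theta>) =
                \<alpha> *\<^sub>R dir_in vs (nat (k mod int ?m)) +
                \<beta> *\<^sub>R dir_out vs (nat (k mod int ?m)))"
    using smoothing_props[OF sm m] by metis
  define j where "j = nat (k mod int ?m)"
  have j: "j < ?m" using m by (simp add: j_def nat_less_iff)
  define c where "c = real ?m / (2*pi)"
  have c0: "c > 0" using m by (simp add: c_def)
  define G where "G \<theta> = cpx (vector_derivative g (at \<theta>))" for \<theta>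
  define Din where "Din = cpx (dir_in vs j)"
  define Dout where "Dout = cpx (dir_out vs j)"
  define Q where "Q \<theta> = G \<theta> * cnj Din" for \<theta>
  define \<sigma> where "\<sigma> = sgn (turn vs j)"
  have tn: "turn vs j \<noteq> 0" using corner_geom(1)[OF grid j] .
  have perp: "Re (Dout * cnj Din) = 0" using corner_geom(2)[OF grid j]
    unfolding Dout_def Din_def Re_cpx_cnj by (simp add: algebra_simps)
  have imt: "Im (Dout * cnj Din) = turn vs j"
    unfolding Dout_def Din_def Im_cpx_cnj turn_def by (simp add: algebra_simps)
  have pm: "\<sigma> * turn vs j = \<bar>turn vs j\<bar>" by (simp add: \<sigma>_def sgn_real_def abs_if)
  have sig: "\<sigma> = 1 \<or> \<sigma> = -1" using tn by (simp add: \<sigma>_def sgn_real_def)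
  have step: "2*pi / real ?m = tk vs (k+1) - tk vs k" "2*pi / real ?m = tk vs k - tk vs (k-1)"
    using tk_step[OF m, of k] tk_step[OF m, of "k-1"] by auto
  have hp: "2 * (pi / real ?m) = 2*pi / real ?m" "pi / real ?m > 0" using m by simp_all
  define a where "a = tk vs (k-1) + pi / real ?m"
  define b where "b = tk vs k + pi / real ?m"
  have ab: "a \<le> b" using step hp unfolding a_def b_def by linarith
  have Ga: "G a = complex_of_real c * Din"
  proof -
    have "G a = cpx ((real ?m / (2*pi)) *\<^sub>R dir_out vs (nat ((k-1) mod int ?m)))"
      unfolding G_def by (rule arg_cong[where f=cpx], rule edge) (use step hp d1 in \<open>auto simp: a_def\<close>)
    then show ?thesis using idx_prev[OF m, of k] by (simp add: cpx_scale c_def Din_def j_def)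
  qed
  have Gb: "G b = complex_of_real c * Dout"
  proof -
    have "G b = cpx ((real ?m / (2*pi)) *\<^sub>R dir_out vs (nat (k mod int ?m)))"
      unfolding G_def by (rule arg_cong[where f=cpx], rule edge) (use step hp d1 in \<open>auto simp: b_def\<close>)
    then show ?thesis by (simp add: cpx_scale c_def Dout_def j_def)
  qed
  define S1 where "S1 = {tk vs (k-1) + \<delta> <..< tk vs k - \<delta>}"
  define S2 where "S2 = {tk vs k - \<delta> <..< tk vs k + \<delta>}"
  define S3 where "S3 = {tk vs k + \<delta> <..< tk vs (k+1) - \<delta>}"
  have condS: "Re (Q \<theta>) \<ge> 0 \<and> \<sigma> * Im (Q \<theta>) \<ge> 0" if thS: "\<theta> \<in> S1 \<union> S2 \<union> S3" for \<theta>
  proof -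
    consider "\<theta> \<in> S1" | "\<theta> \<in> S2" | "\<theta> \<in> S3" using thS by blast
    then show ?thesis
    proof cases
      case 1
      then have "G \<theta> = cpx ((real ?m / (2*pi)) *\<^sub>R dir_out vs (nat ((k-1) mod int ?m)))"
        unfolding G_def S1_def by (intro arg_cong[where f=cpx] edge) auto
      then have "G \<theta> = complex_of_real c * Din"
        using idx_prev[OF m, of k] by (simp add: cpx_scale c_def Din_def j_def)
      then have "Q \<theta> = complex_of_real c * (Din * cnj Din)" 
        unfolding Q_def by (simp add: mult.assoc)
      then show ?thesis using c0 by simp
    next
      case 2
      then have "\<bar>\<theta> - tk vs k\<bar> < \<delta>" unfolding S2_def by auto
      then obtain \<alpha> \<beta> where ab: "\<alpha> \<ge> 0" "\<beta> \<ge> 0"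
        "vector_derivative g (at \<theta>) = \<alpha> *\<^sub>R dir_in vs j + \<beta> *\<^sub>R dir_out vs j"
        using win unfolding j_def by blast
      then have "Q \<theta> = complex_of_real \<alpha> * (Din * cnj Din) + complex_of_real \<beta> * (Dout * cnj Din)"
        unfolding Q_def G_def by (simp add: cpx_add cpx_scale Din_def Dout_def algebra_simps)
      then have "Re (Q \<theta>) = \<alpha> * ((Re Din)\<^sup>2 + (Im Din)\<^sup>2)" "Im (Q \<theta>) = \<beta> * turn vs j"
        using perp imt by (simp_all add: power2_eq_square)
      then show ?thesis using ab pm by (simp add: mult.left_commute)
    next
      case 3
      then have "G \<theta> = cpx ((real ?m / (2*pi)) *\<^sub>R dir_out vs (nat (k mod int ?m)))"
        unfolding G_def S3_def by (intro arg_cong[where f=cpx] edge) auto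
      then have "Q \<theta> = complex_of_real c * (Dout * cnj Din)"
        unfolding Q_def by (simp add: cpx_scale c_def Dout_def j_def mult.assoc)
      then have r: "Re (Q \<theta>) = 0" and i: "Im (Q \<theta>) = c * turn vs j" using perp imt by simp_all
      have "\<sigma> * Im (Q \<theta>) = c * \<bar>turn vs j\<bar>"
        unfolding i using pm by (metis mult.left_commute)
      then show ?thesis using c0 r by simp
    qed
  qed
  have Gc: "continuous_on UNIV G"
  proof -
    have "continuous_on UNIV (\<lambda>\<theta>. vector_derivative g (at \<theta>))" using sm by (simp add: smoothing_def)
    then show ?thesis unfolding G_def by (rule continuous_on_cpx)
  qed
  have Qc: "continuous_on UNIV Q" unfolding Q_def by (intro continuous_intros Gc)
  have cl: "{a..b} \<subseteq> closure (S1 \<union> S2 \<union> S3)"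
  proof -
    have "tk vs (k-1) + \<delta> < tk vs k - \<delta>" "tk vs k - \<delta> < tk vs k + \<delta>" "tk vs k + \<delta> < tk vs (k+1) - \<delta>"
      using step hp d1 d0 by linarith+
    then have "closure (S1 \<union> S2 \<union> S3) = {tk vs (k-1) + \<delta>..tk vs k - \<delta>} \<union> {tk vs k - \<delta>..tk vs k + \<delta>} \<union> {tk vs k + \<delta>..tk vs (k+1) - \<delta>}"
      unfolding S1_def S2_def S3_def closure_Un by simp
    moreover have "tk vs (k-1) + \<delta> \<le> a" "b \<le> tk vs (k+1) - \<delta>"
      using step hp d1 unfolding a_def b_def by linarith+
    ultimately show ?thesis unfolding closure_Un by (intro subsetI) auto
  qed
  have condab: "Re (Q \<theta>) \<ge> 0 \<and> \<sigma> * Im (Q \<theta>) \<ge> 0" if th: "\<theta> \<in> {a..b}" for \<theta>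
  proof
    show "Re (Q \<theta>) \<ge> 0"
      by (rule continuous_ge_on_closure[where f="\<lambda>x. Re (Q x)" and S="S1 \<union> S2 \<union> S3"])
         (use condS cl th in \<open>auto intro!: continuous_intros continuous_on_subset[OF Qc]\<close>)
    show "\<sigma> * Im (Q \<theta>) \<ge> 0"
      by (rule continuous_ge_on_closure[where f="\<lambda>x. \<sigma> * Im (Q x)" and S="S1 \<union> S2 \<union> S3"])
         (use condS cl th in \<open>auto intro!: continuous_intros continuous_on_subset[OF Qc]\<close>)
  qed
  define \<psi> where "\<psi> \<theta> = Im (F \<theta>) - Im (F a)" for \<theta>
  have Din_eq: "Din = exp (F a) / complex_of_real c" using Ga c0 FG[of a] unfolding G_def by (simp add: field_simps)
  have Qexp: "Q \<theta> = exp (F \<theta> + cnj (F a)) / complex_of_real c" for \<theta>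
    unfolding Q_def G_def FG Din_eq by (simp add: exp_add exp_cnj)
  have ReQ: "Re (Q \<theta>) = exp (Re (F \<theta>) + Re (F a)) / c * cos (\<psi> \<theta>)"
   and ImQ: "Im (Q \<theta>) = exp (Re (F \<theta>) + Re (F a)) / c * sin (\<psi> \<theta>)" for \<theta>
    unfolding Qexp \<psi>_def by (simp_all add: Re_exp Im_exp Re_divide_of_real Im_divide_of_real)
  have pos: "exp (Re (F \<theta>) + Re (F a)) / c > 0" for \<theta> using c0 by simp
  have q: "cos (\<psi> \<theta>) \<ge> 0 \<and> \<sigma> * sin (\<psi> \<theta>) \<ge> 0" if "\<theta> \<in> {a..b}" for \<theta>
  proof -
    define E where "E = exp (Re (F \<theta>) + Re (F a)) / c"
    have E: "E > 0" using pos unfolding E_def by blast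
    have h1: "0 \<le> E * cos (\<psi> \<theta>)" using condab[OF that] ReQ[of \<theta>] unfolding E_def by simp
    have h2: "0 \<le> E * (\<sigma> * sin (\<psi> \<theta>))" using condab[OF that] ImQ[of \<theta>] unfolding E_def
      by (metis mult.left_commute)
    have pp: "0 \<le> x" if "0 \<le> E * x" for x
    proof -
      have "x = (E * x) / E" using E by simp
      also have "\<dots> \<ge> 0" using that E by (intro divide_nonneg_pos) auto
      finally show ?thesis .
    qed
    show ?thesis using pp[OF h1] pp[OF h2] by simp
  qed
  have Qb: "Q b = complex_of_real c * (Dout * cnj Din)" unfolding Q_def Gb by simp
  have cb: "cos (\<psi> b) = 0" using ReQ[of b] pos[of b] perp c0 unfolding Qb by simp
  have psic: "continuous_on {a..b} \<psi>" unfolding \<psi>_def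
    by (intro continuous_intros continuous_on_subset[OF Fc]) auto
  have "\<psi> b = \<sigma> * (pi/2)"
    using sig
  proof
    assume s: "\<sigma> = 1"
    show ?thesis using angle_pos[OF ab psic _ _ cb] q s by (simp add: \<psi>_def)
  next
    assume s: "\<sigma> = -1"
    have "(\<lambda>x. - \<psi> x) b = pi/2"
    proof (rule angle_pos[OF ab])
      show "continuous_on {a..b} (\<lambda>x. - \<psi> x)" using psic by (intro continuous_intros)
      show "- \<psi> a = 0" by (simp add: \<psi>_def)
      show "cos (- \<psi> b) = 0" using cb by simp
      fix \<theta> assume "\<theta> \<in> {a..b}"
      then show "0 \<le> cos (- \<psi> \<theta>) \<and> 0 \<le> sin (- \<psi> \<theta>)" using q s by auto
    qed
    then show ?thesis using s by simp
  qed
  then show ?thesis unfolding \<psi>_def a_def b_def \<sigma>_def j_def by simp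
qed


lemma sum_sgn_card:
  fixes f :: "nat \<Rightarrow> real"
  shows "(\<Sum>j<m. sgn (f j)) = real (card {j. j < m \<and> f j > 0}) - real (card {j. j < m \<and> f j < 0})"
proof -
  have "(\<Sum>j<m. sgn (f j)) = (\<Sum>j<m. (if f j > 0 then 1 else 0) - (if f j < 0 then 1 else 0))"
    by (intro sum.cong) (auto simp: sgn_real_def)
  also have "\<dots> = (\<Sum>j<m. (if f j > 0 then 1 else 0)) - (\<Sum>j<m. (if f j < 0 then 1 else (0::real)))"
    by (simp add: sum_subtractf)
  also have "(\<Sum>j<m. (if f j > 0 then 1 else (0::real))) = real (card {j. j < m \<and> f j > 0})"
    by (simp add: sum.inter_filter[symmetric])
  also have "(\<Sum>j<m. (if f j < 0 then 1 else (0::real))) = real (card {j. j < m \<and> f j < 0})"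
    by (simp add: sum.inter_filter[symmetric])
  finally show ?thesis .
qed

lemma deriv_periodic:
  assumes sm: "smoothing vs g"
  shows "vector_derivative g (at (\<theta> + 2*pi)) = vector_derivative g (at \<theta>)"
proof -
  have per: "\<And>x. g (x + 2*pi) = g x" and dif: "\<And>x. g differentiable (at x)"
    using sm by (auto simp: smoothing_def)
  let ?D = "vector_derivative g (at (\<theta> + 2*pi))"
  have d: "(g has_vector_derivative ?D) (at (\<theta> + 2*pi))" using dif vector_derivative_works by blast
  have s: "((\<lambda>x. x + 2*pi) has_vector_derivative 1) (at \<theta>)"
    by (rule derivative_eq_intros refl | simp)+
  have "((g \<circ> (\<lambda>x. x + 2*pi)) has_vector_derivative (1::real) *\<^sub>R ?D) (at \<theta>)"
    by (rule vector_diff_chain_at[OF s]) (simp add: d)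
  moreover have "g \<circ> (\<lambda>x. x + 2*pi) = g" by (simp add: o_def per)
  ultimately have "(g has_vector_derivative ?D) (at \<theta>)" by simp
  then show ?thesis by (simp add: vector_derivative_at)
qed

lemma cpx_eq0: "cpx v = 0 \<longleftrightarrow> v = 0" by (simp add: cpx_def complex_eq_iff prod_eq_iff)

lemma rot_lift:
  assumes grid: "immersed_grid n vs" and sm: "smoothing vs g"
  obtains F where "continuous_on UNIV F" "\<And>\<theta>. cpx (vector_derivative g (at \<theta>)) = exp (F \<theta>)"
     "\<And>\<theta>. Im (F (\<theta> + 2*pi)) = Im (F \<theta>) + 2*pi*wG vs"
proof -
  let ?m = "length vs"
  have m: "0 < ?m" using grid_len[OF grid] by auto
  define G where "G \<theta> = cpx (vector_derivative g (at \<theta>))" for \<theta>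
  have Gc: "continuous_on UNIV G"
  proof -
    have "continuous_on UNIV (\<lambda>\<theta>. vector_derivative g (at \<theta>))" using sm by (simp add: smoothing_def)
    then show ?thesis unfolding G_def by (rule continuous_on_cpx)
  qed
  have Gnz: "G \<theta> \<noteq> 0" for \<theta>
  proof -
    have "vector_derivative g (at \<theta>) \<noteq> 0" using sm unfolding smoothing_def by blast
    then show ?thesis by (simp add: G_def cpx_eq0)
  qed
  obtain F where Fc: "continuous_on UNIV F" and FG0: "\<And>x. x \<in> UNIV \<Longrightarrow> G x = exp (F x)"
    by (rule continuous_logarithm_on_simply_connected[OF Gc convex_imp_simply_connected[OF convex_UNIV]
        locally_path_connected_UNIV Gnz]) blast
  have FG: "\<And>x. G x = exp (F x)" using FG0 by simp
  have FG': "\<And>\<theta>. cpx (vector_derivative g (at \<theta>)) = exp (F \<theta>)" using FG unfolding G_def .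
  define d where "d \<theta> = F (\<theta> + 2*pi) - F \<theta>" for \<theta>
  have dint: "\<exists>k::int. d \<theta> = of_int (2 * k) * complex_of_real pi * \<i>" for \<theta>
  proof -
    have "exp (F (\<theta> + 2*pi)) = exp (F \<theta>)"
      using FG[of "\<theta> + 2*pi"] FG[of \<theta>] deriv_periodic[OF sm, of \<theta>] unfolding G_def by simp
    then obtain k :: int where "F (\<theta> + 2*pi) = F \<theta> + (of_int (2 * k) * pi) * \<i>"
      unfolding exp_eq by blast
    then show ?thesis unfolding d_def by auto
  qed
  have dc: "continuous_on UNIV d" unfolding d_def
    by (intro continuous_intros continuous_on_compose2[OF Fc]) auto
  have dconst: "d constant_on UNIV"
  proof (rule continuous_discrete_range_constant[OF connected_UNIV dc])
    fix x :: real assume "x \<in> UNIV"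
    obtain k1 :: int where k1: "d x = of_int (2 * k1) * complex_of_real pi * \<i>" using dint by blast
    show "\<exists>e>0. \<forall>y. y \<in> UNIV \<and> d y \<noteq> d x \<longrightarrow> e \<le> norm (d y - d x)"
    proof (intro exI[of _ "2*pi"] conjI allI impI)
      fix y assume y: "y \<in> UNIV \<and> d y \<noteq> d x"
      obtain k2 :: int where k2: "d y = of_int (2 * k2) * complex_of_real pi * \<i>" using dint by blast
      have ne: "k2 \<noteq> k1" using y k1 k2 by auto
      have eq: "d y - d x = complex_of_real (2 * pi * real_of_int (k2 - k1)) * \<i>"
        unfolding k1 k2 by (simp add: algebra_simps)
      have "norm (d y - d x) = \<bar>2 * pi * real_of_int (k2 - k1)\<bar>"
        unfolding eq norm_mult norm_of_real by simp
      then have "norm (d y - d x) = 2 * pi * \<bar>real_of_int (k2 - k1)\<bar>"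
        by (simp add: abs_mult)
      moreover have "\<bar>real_of_int (k2 - k1)\<bar> \<ge> 1" using ne by linarith
      ultimately show "2*pi \<le> norm (d y - d x)" using pi_gt_zero
        by (simp add: mult_le_cancel_left1)
    qed (simp add: pi_gt_zero)
  qed
  define x0 where "x0 = tk vs (-1) + pi / real ?m"
  have tele: "Im (F (x0 + 2*pi)) - Im (F x0) = (\<Sum>kk<?m. sgn (turn vs kk) * (pi/2))"
  proof -
    define f where "f kk = Im (F (tk vs (int kk - 1) + pi / real ?m))" for kk
    have "(\<Sum>kk<?m. f (Suc kk) - f kk) = f ?m - f 0" by (rule sum_lessThan_telescope)
    moreover have "f (Suc kk) - f kk = sgn (turn vs kk) * (pi/2)" if "kk < ?m" for kk
    proof -
      have "f (Suc kk) - f kk = sgn (turn vs (nat (int kk mod int ?m))) * (pi/2)"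
        using corner_step[OF grid sm Fc FG', of "int kk"] unfolding f_def by simp
      moreover have "nat (int kk mod int ?m) = kk" using that by (simp add: zmod_int)
      ultimately show ?thesis by simp
    qed
    moreover have "f ?m = Im (F (x0 + 2*pi))"
    proof -
      have "tk vs (int ?m - 1) = tk vs (-1) + 2*pi" using m unfolding tk_def by (simp add: field_simps)
      then show ?thesis unfolding f_def x0_def by (simp add: algebra_simps)
    qed
    moreover have "f 0 = Im (F x0)" unfolding f_def x0_def by simp
    ultimately show ?thesis by simp
  qed
  also have "\<dots> = (pi/2) * (\<Sum>kk<?m. sgn (turn vs kk))" by (simp add: sum_distrib_left mult.commute)
  also have "\<dots> = 2*pi*wG vs"
    unfolding sum_sgn_card wG_def ccw_corners_def cw_corners_def by simp
  finally have x0eq: "Im (d x0) = 2*pi*wG vs" unfolding d_def by simp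
  show ?thesis
  proof (rule that[OF Fc FG'])
    fix \<theta>
    have "d \<theta> = d x0" using dconst unfolding constant_on_def by auto
    then have "Im (d \<theta>) = Im (d x0)" by simp
    then show "Im (F (\<theta> + 2*pi)) = Im (F \<theta>) + 2*pi*wG vs" using x0eq unfolding d_def by simp
  qed
qed


lemma periodic_int:
  fixes F :: "real \<Rightarrow> complex"
  assumes "\<And>\<theta>. Im (F (\<theta> + 2*pi)) = Im (F \<theta>) + 2*pi*w"
  shows "Im (F (\<theta> + 2*pi * of_int a)) = Im (F \<theta>) + 2*pi * of_int a*w"
proof (induction a arbitrary: \<theta> rule: int_induct[where k=0])
  case base then show ?case by simp
next
  case (step1 i)
  have "Im (F (\<theta> + 2*pi * of_int (i+1))) = Im (F ((\<theta> + 2*pi * of_int i) + 2*pi))"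
    by (simp add: algebra_simps)
  also have "\<dots> = Im (F \<theta>) + 2*pi * of_int i*w + 2*pi*w" using assms step1(2) by simp
  finally show ?case by (simp add: algebra_simps)
next
  case (step2 i)
  have "Im (F ((\<theta> + 2*pi * of_int (i-1)) + 2*pi)) = Im (F (\<theta> + 2*pi * of_int (i-1))) + 2*pi*w"
    using assms by simp
  moreover have "(\<theta> + 2*pi * of_int (i-1)) + 2*pi = \<theta> + 2*pi * of_int i" by (simp add: algebra_simps)
  ultimately show ?case using step2(2)[of \<theta>] by (simp add: algebra_simps)
qed

theorem corollary1p1:
  fixes n :: nat and cyc :: "cell4 list" and gzx gwy :: "real \<Rightarrow> real \<times> real"
    and p :: "real \<Rightarrow> real \<times> real" and a b :: int
  assumes "lagrangian_hypercube n cyc"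
    and "smoothing (G_zx cyc) gzx" and "smoothing (G_wy cyc) gwy"
    and "continuous_on {0..1} p"
    and "p 1 = p 0 + (2 * pi * real_of_int a, 2 * pi * real_of_int b)"
  shows "maslov_index (\<lambda>t. torus_ds gzx gwy (p t)) (\<lambda>t. torus_du gzx gwy (p t))
         = complex_of_real (2 * real_of_int a * wG (G_zx cyc) + 2 * real_of_int b * wG (G_wy cyc))"
proof -
  have g1: "immersed_grid n (G_zx cyc)" and g2: "immersed_grid n (G_wy cyc)"
    using assms(1) by (auto simp: lagrangian_hypercube_def lagrangian_grid_def)
  obtain F1 where F1c: "continuous_on UNIV F1" and F1: "\<And>\<theta>. cpx (vector_derivative gzx (at \<theta>)) = exp (F1 \<theta>)"
     and F1p: "\<And>\<theta>. Im (F1 (\<theta> + 2*pi)) = Im (F1 \<theta>) + 2*pi*wG (G_zx cyc)"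
    using rot_lift[OF g1 assms(2)] by blast
  obtain F2 where F2c: "continuous_on UNIV F2" and F2: "\<And>\<theta>. cpx (vector_derivative gwy (at \<theta>)) = exp (F2 \<theta>)"
     and F2p: "\<And>\<theta>. Im (F2 (\<theta> + 2*pi)) = Im (F2 \<theta>) + 2*pi*wG (G_wy cyc)"
    using rot_lift[OF g2 assms(3)] by blast
  have dz: "\<And>s. gzx differentiable (at s)" and dw: "\<And>u. gwy differentiable (at u)"
    using assms(2,3) by (auto simp: smoothing_def)
  define h where "h t = 2 * \<i> * complex_of_real (Im (F1 (fst (p t))) + Im (F2 (snd (p t))))" for t
  have eq: "(\<lambda>t. lag_rho (torus_ds gzx gwy (p t)) (torus_du gzx gwy (p t))) = exp \<circ> h"
  proof
    fix t
    obtain s u where pt: "p t = (s, u)" by fastforce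
    have "lag_det (torus_ds gzx gwy (p t)) (torus_du gzx gwy (p t)) = - exp (F1 s + F2 u)"
      unfolding pt torus_ds_eq[OF dz] torus_du_eq[OF dw] lag_det_eq
      by (simp add: F1 F2 exp_add)
    then have "lag_rho (torus_ds gzx gwy (p t)) (torus_du gzx gwy (p t))
       = (- exp (F1 s + F2 u))\<^sup>2 / complex_of_real ((cmod (- exp (F1 s + F2 u)))\<^sup>2)"
      by (simp only: lag_rho_def)
    also have "\<dots> = exp (2 * \<i> * complex_of_real (Im (F1 s + F2 u)))" by (rule exp_rho)
    finally show "lag_rho (torus_ds gzx gwy (p t)) (torus_du gzx gwy (p t)) = (exp \<circ> h) t"
      by (simp add: h_def pt)
  qed
  have ph: "path h"
    unfolding path_def h_def
    apply (intro continuous_intros)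
     apply (rule continuous_on_compose2[OF F1c _ subset_UNIV]) 
     apply (intro continuous_intros assms(4))
    apply (rule continuous_on_compose2[OF F2c _ subset_UNIV]) 
    apply (intro continuous_intros assms(4))
    done
  obtain s0 u0 where p0: "p 0 = (s0, u0)" by fastforce
  have p1: "p 1 = (s0 + 2*pi * of_int a, u0 + 2*pi * of_int b)" using assms(5) p0 by simp
  have "h 1 - h 0 = 2 * \<i> * complex_of_real (2*pi * of_int a*wG (G_zx cyc) + 2*pi * of_int b*wG (G_wy cyc))"
    unfolding h_def p0 p1 using periodic_int[of F1, OF F1p] periodic_int[of F2, OF F2p]
    by (simp add: algebra_simps)
  then show ?thesis
    unfolding maslov_index_def eq winding_number_compose_exp[OF ph]
    by (simp add: pathfinish_def pathstart_def field_simps)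
qed

end
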